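(* Let $\mathbf{S}=\langle S;\to,\neg,{}^+,{}^-,1\rangle$ be a strong quasi-Wajsberg* algebra. For $x,y\in S$ define $0:=x\to x$, $x\oplus y:=\neg x\to y$ and $-x:=\neg x$. Then $g(\mathbf{S})=\langle S;\oplus,-,{}^+,{}^-,0,1\rangle$ is a strong quasi-MV* algebra (with $x\vee y:=(x^{+}\oplus(-x^{+}\oplus y^{+})^{+})\oplus(x^{-}\oplus(-x^{-}\oplus y^{-})^{+})$).
   Context: A quasi-Wajsberg* algebra is an algebra $\langle W;\to,\neg,{}^+,{}^-,1\rangle$ of type $\langle 2,1,1,1,0\rangle$ (${}^+,{}^-$ bind more tightly than $\neg$, which binds more tightly than $\to$) such that for all $x,y,z$: (1) $x\to y=\neg y\to\neg x$; (2) $(x\to 1)\to((y\to 1)\to z)=(y\to 1)\to((x\to 1)\to z)$; (3) $(1\to x)\to 1=1$; (4) $(z\to z)\to(x\to y)=x\to y$; (5) $(1\to 1)\to x^{+}=((1\to 1)\to x)^{+}=(x\to 1)\to 1$ and $(1\to 1)\to x^{-}=((1\to 1)\to x)^{-}=(x\to\neg 1)\to\neg 1$; (6) $x\to y=(y^{+}\to x^{-})\to(x^{+}\to y^{-})$; (7) $\neg(x\to y)=y\to x$; (8) $\neg\neg x=x$; (9) $(x\to(\neg x\to y))^{+}=x^{+}\to(\neg x^{+}\to y^{+})$; (10) $x\vee y=y\vee x$; (11) $x\vee(y\vee z)=(x\vee y)\vee z$; (12) $x\to(y\vee z)=(x\to y)\vee(x\to z)$; where $x\vee y:=((x^{+}\to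 y^{+})^{+}\to(\neg x)^{-})\to((y^{-}\to x^{-})^{-}\to x^{-})$. In a quasi-Wajsberg* algebra $x\to x$ does not depend on $x$. A strong quasi-Wajsberg* algebra is a quasi-Wajsberg* algebra satisfying $x^+=(1\to 1)\to x^+$ and $x^-=(1\to 1)\to x^-$. A quasi-MV* algebra is an algebra $\langle A;\oplus,-,{}^{+},{}^{-},0,1\rangle$ of type $\langle 2,1,1,1,0,0\rangle$ ($-1$ denotes $-(1)$) such that for all $x,y,z$: $x\oplus y=y\oplus x$; $(1\oplus x)\oplus(y\oplus(1\oplus z))=((1\oplus x)\oplus y)\oplus(1\oplus z)$; $(x\oplus 1)\oplus 1=1$; $(x\oplus y)\oplus 0=x\oplus y$; $x^{+}\oplus 0=(x\oplus 0)^{+}=1\oplus(-1\oplus x)$ and $x^{-}\oplus 0=(x\oplus 0)^{-}=-1\oplus(1\oplus x)$; $x\oplus y=(x^{+}\oplus y^{+})\oplus(x^{-}\oplus y^{-})$; $0=-0$; $x\oplus(-x)=0$; $-(x\oplus y)=(-x)\oplus(-y)$; $-(-x)=x$; $(-x\oplus(x\oplus y))^{+}=-x^{+}\oplus(x^{+}\oplus y^{+})$; $x\vee y=y\vee x$; $x\vee(y\vee z)=(x\vee y)\vee z$; $x\oplus(y\vee z)=(x\oplus y)\vee(x\oplus z)$, with $\vee$ as in the claim. A strong quasi-MV* algebra is a quasi-MV* algebra satisfying $x^+=x^+\oplus 0$ and $x^-=x^-\oplus 0$. *)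

theory Defs
  imports Main
begin

text \<open>Algebras are given by their operations on the whole type 'a (the carrier).
  Quasi-Wajsberg* signature: imp (binary arrow), neg (negation), pl (x^+), mi (x^-), one (1).\<close>

definition qW_join :: "('a \<Rightarrow> 'a \<Rightarrow> 'a) \<Rightarrow> ('a \<Rightarrow> 'a) \<Rightarrow> ('a \<Rightarrow> 'a) \<Rightarrow> ('a \<Rightarrow> 'a) \<Rightarrow> 'a \<Rightarrow> 'a \<Rightarrow> 'a" where
  "qW_join imp neg pl mi x y =
     imp (imp (pl (imp (pl x) (pl y))) (mi (neg x)))
         (imp (mi (imp (mi y) (mi x))) (mi x))"

definition quasi_Wajsberg_star ::
  "('a \<Rightarrow> 'a \<Rightarrow> 'a) \<Rightarrow> ('a \<Rightarrow> 'a) \<Rightarrow> ('a \<Rightarrow> 'a) \<Rightarrow> ('a \<Rightarrow> 'a) \<Rightarrow> 'a \<Rightarrow> bool" where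
  "quasi_Wajsberg_star imp neg pl mi one \<longleftrightarrow>
    (\<forall>x y. imp x y = imp (neg y) (neg x)) \<and>
    (\<forall>x y z. imp (imp x one) (imp (imp y one) z) = imp (imp y one) (imp (imp x one) z)) \<and>
    (\<forall>x. imp (imp one x) one = one) \<and>
    (\<forall>x y z. imp (imp z z) (imp x y) = imp x y) \<and>
    (\<forall>x. imp (imp one one) (pl x) = pl (imp (imp one one) x) \<and>
         pl (imp (imp one one) x) = imp (imp x one) one) \<and>
    (\<forall>x. imp (imp one one) (mi x) = mi (imp (imp one one) x) \<and>
         mi (imp (imp one one) x) = imp (imp x (neg one)) (neg one)) \<and>
    (\<forall>x y. imp x y = imp (imp (pl y) (mi x)) (imp (pl x) (mi y))) \<and>
    (\<forall>x y. neg (imp x y) = imp y x) \<and>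
    (\<forall>x. neg (neg x) = x) \<and>
    (\<forall>x y. pl (imp x (imp (neg x) y)) = imp (pl x) (imp (neg (pl x)) (pl y))) \<and>
    (\<forall>x y. qW_join imp neg pl mi x y = qW_join imp neg pl mi y x) \<and>
    (\<forall>x y z. qW_join imp neg pl mi x (qW_join imp neg pl mi y z) =
             qW_join imp neg pl mi (qW_join imp neg pl mi x y) z) \<and>
    (\<forall>x y z. imp x (qW_join imp neg pl mi y z) =
             qW_join imp neg pl mi (imp x y) (imp x z))"

definition strong_quasi_Wajsberg_star ::
  "('a \<Rightarrow> 'a \<Rightarrow> 'a) \<Rightarrow> ('a \<Rightarrow> 'a) \<Rightarrow> ('a \<Rightarrow> 'a) \<Rightarrow> ('a \<Rightarrow> 'a) \<Rightarrow> 'a \<Rightarrow> bool" where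
  "strong_quasi_Wajsberg_star imp neg pl mi one \<longleftrightarrow>
    quasi_Wajsberg_star imp neg pl mi one \<and>
    (\<forall>x. pl x = imp (imp one one) (pl x)) \<and>
    (\<forall>x. mi x = imp (imp one one) (mi x))"

definition qMV_join :: "('a \<Rightarrow> 'a \<Rightarrow> 'a) \<Rightarrow> ('a \<Rightarrow> 'a) \<Rightarrow> ('a \<Rightarrow> 'a) \<Rightarrow> ('a \<Rightarrow> 'a) \<Rightarrow> 'a \<Rightarrow> 'a \<Rightarrow> 'a" where
  "qMV_join opl mn pl mi x y =
     opl (opl (pl x) (pl (opl (mn (pl x)) (pl y))))
         (opl (mi x) (pl (opl (mn (mi x)) (mi y))))"

definition quasi_MV_star ::
  "('a \<Rightarrow> 'a \<Rightarrow> 'a) \<Rightarrow> ('a \<Rightarrow> 'a) \<Rightarrow> ('a \<Rightarrow> 'a) \<Rightarrow> ('a \<Rightarrow> 'a) \<Rightarrow> 'a \<Rightarrow> 'a \<Rightarrow> bool" where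
  "quasi_MV_star opl mn pl mi zero one \<longleftrightarrow>
    (\<forall>x y. opl x y = opl y x) \<and>
    (\<forall>x y z. opl (opl one x) (opl y (opl one z)) = opl (opl (opl one x) y) (opl one z)) \<and>
    (\<forall>x. opl (opl x one) one = one) \<and>
    (\<forall>x y. opl (opl x y) zero = opl x y) \<and>
    (\<forall>x. opl (pl x) zero = pl (opl x zero) \<and> pl (opl x zero) = opl one (opl (mn one) x)) \<and>
    (\<forall>x. opl (mi x) zero = mi (opl x zero) \<and> mi (opl x zero) = opl (mn one) (opl one x)) \<and>
    (\<forall>x y. opl x y = opl (opl (pl x) (pl y)) (opl (mi x) (mi y))) \<and>
    zero = mn zero \<and>
    (\<forall>x. opl x (mn x) = zero) \<and>
    (\<forall>x y. mn (opl x y) = opl (mn x) (mn y)) \<and>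
    (\<forall>x. mn (mn x) = x) \<and>
    (\<forall>x y. pl (opl (mn x) (opl x y)) = opl (mn (pl x)) (opl (pl x) (pl y))) \<and>
    (\<forall>x y. qMV_join opl mn pl mi x y = qMV_join opl mn pl mi y x) \<and>
    (\<forall>x y z. qMV_join opl mn pl mi x (qMV_join opl mn pl mi y z) =
             qMV_join opl mn pl mi (qMV_join opl mn pl mi x y) z) \<and>
    (\<forall>x y z. opl x (qMV_join opl mn pl mi y z) =
             qMV_join opl mn pl mi (opl x y) (opl x z))"

definition strong_quasi_MV_star ::
  "('a \<Rightarrow> 'a \<Rightarrow> 'a) \<Rightarrow> ('a \<Rightarrow> 'a) \<Rightarrow> ('a \<Rightarrow> 'a) \<Rightarrow> ('a \<Rightarrow> 'a) \<Rightarrow> 'a \<Rightarrow> 'a \<Rightarrow> bool" where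
  "strong_quasi_MV_star opl mn pl mi zero one \<longleftrightarrow>
    quasi_MV_star opl mn pl mi zero one \<and>
    (\<forall>x. pl x = opl (pl x) zero) \<and>
    (\<forall>x. mi x = opl (mi x) zero)"

end

theory Submission
  imports Defs
begin

theorem proposition3p5:
  fixes imp :: "'a \<Rightarrow> 'a \<Rightarrow> 'a" and neg pl mi :: "'a \<Rightarrow> 'a" and one :: 'a and u :: 'a
  assumes "strong_quasi_Wajsberg_star imp neg pl mi one"
  shows "strong_quasi_MV_star (\<lambda>x y. imp (neg x) y) neg pl mi (imp u u) one"
proof -
  have W1: "\<forall>x y. imp x y = imp (neg y) (neg x)"
    using assms unfolding strong_quasi_Wajsberg_star_def quasi_Wajsberg_star_def by (elim conjE) assumption
  note W1 = W1[rule_format]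
  have W2: "\<forall>x y z. imp (imp x one) (imp (imp y one) z) = imp (imp y one) (imp (imp x one) z)"
    using assms unfolding strong_quasi_Wajsberg_star_def quasi_Wajsberg_star_def by (elim conjE) assumption
  note W2 = W2[rule_format]
  have W3: "\<forall>x. imp (imp one x) one = one"
    using assms unfolding strong_quasi_Wajsberg_star_def quasi_Wajsberg_star_def by (elim conjE) assumption
  note W3 = W3[rule_format]
  have W4: "\<forall>x y z. imp (imp z z) (imp x y) = imp x y"
    using assms unfolding strong_quasi_Wajsberg_star_def quasi_Wajsberg_star_def by (elim conjE) assumption
  note W4 = W4[rule_format]
  have W5: "\<forall>x. imp (imp one one) (pl x) = pl (imp (imp one one) x) \<and> pl (imp (imp one one) x) = imp (imp x one) one"
    using assms unfolding strong_quasi_Wajsberg_star_def quasi_Wajsberg_star_def by (elim conjE) assumption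
  note W5 = W5[rule_format]
  have W5m: "\<forall>x. imp (imp one one) (mi x) = mi (imp (imp one one) x) \<and> mi (imp (imp one one) x) = imp (imp x (neg one)) (neg one)"
    using assms unfolding strong_quasi_Wajsberg_star_def quasi_Wajsberg_star_def by (elim conjE) assumption
  note W5m = W5m[rule_format]
  have W6: "\<forall>x y. imp x y = imp (imp (pl y) (mi x)) (imp (pl x) (mi y))"
    using assms unfolding strong_quasi_Wajsberg_star_def quasi_Wajsberg_star_def by (elim conjE) assumption
  note W6 = W6[rule_format]
  have W7: "\<forall>x y. neg (imp x y) = imp y x"
    using assms unfolding strong_quasi_Wajsberg_star_def quasi_Wajsberg_star_def by (elim conjE) assumption
  note W7 = W7[rule_format]
  have W8: "\<forall>x. neg (neg x) = x"
    using assms unfolding strong_quasi_Wajsberg_star_def quasi_Wajsberg_star_def by (elim conjE) assumption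
  note W8 = W8[rule_format]
  have W9: "\<forall>x y. pl (imp x (imp (neg x) y)) = imp (pl x) (imp (neg (pl x)) (pl y))"
    using assms unfolding strong_quasi_Wajsberg_star_def quasi_Wajsberg_star_def by (elim conjE) assumption
  note W9 = W9[rule_format]
  have W10: "\<forall>x y. qW_join imp neg pl mi x y = qW_join imp neg pl mi y x"
    using assms unfolding strong_quasi_Wajsberg_star_def quasi_Wajsberg_star_def by (elim conjE) assumption
  note W10 = W10[rule_format]
  have W11: "\<forall>x y z. qW_join imp neg pl mi x (qW_join imp neg pl mi y z) = qW_join imp neg pl mi (qW_join imp neg pl mi x y) z"
    using assms unfolding strong_quasi_Wajsberg_star_def quasi_Wajsberg_star_def by (elim conjE) assumption
  note W11 = W11[rule_format]
  have W12: "\<forall>x y z. imp x (qW_join imp neg pl mi y z) = qW_join imp neg pl mi (imp x y) (imp x z)"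
    using assms unfolding strong_quasi_Wajsberg_star_def quasi_Wajsberg_star_def by (elim conjE) assumption
  note W12 = W12[rule_format]
  have SP: "\<forall>x. pl x = imp (imp one one) (pl x)"
    using assms unfolding strong_quasi_Wajsberg_star_def quasi_Wajsberg_star_def by (elim conjE) assumption
  note SP = SP[rule_format]
  have SM: "\<forall>x. mi x = imp (imp one one) (mi x)"
    using assms unfolding strong_quasi_Wajsberg_star_def quasi_Wajsberg_star_def by (elim conjE) assumption
  note SM = SM[rule_format]
  have E: "\<And>x y. imp x x = imp y y"
  proof -
    fix x y
    have "imp (imp y y) (imp x x) = imp x x" by (rule W4)
    moreover have "neg (imp (imp x x) (imp y y)) = imp (imp y y) (imp x x)" by (rule W7)
    moreover have "imp (imp x x) (imp y y) = imp y y" by (rule W4)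
    moreover have "neg (imp y y) = imp y y" by (rule W7)
    ultimately show "imp x x = imp y y" by simp
  qed
  have PL: "\<And>x. pl x = imp (imp x one) one" using SP W5 by metis
  have MI: "\<And>x. mi x = imp (imp x (neg one)) (neg one)" using SM W5m by metis
  have NPL: "\<And>x. neg (pl x) = mi (neg x)"
  proof -
    fix x
    have "neg (pl x) = imp one (imp x one)" using PL W7 by metis
    moreover have "mi (neg x) = imp (imp one x) (neg one)" using MI W1 by metis
    moreover have "imp (imp one x) (neg one) = imp one (imp x one)" using W1 W7 W8 by metis
    ultimately show "neg (pl x) = mi (neg x)" by simp
  qed
  have NMI: "\<And>x. neg (mi x) = pl (neg x)" using NPL W8 by metis
  have N0: "neg (imp u u) = imp u u" by (rule W7)
  have EX: "\<And>x y z. imp (imp one x) (imp (imp one y) z) = imp (imp one y) (imp (imp one x) z)"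
  proof -
    fix x y z
    have a: "imp (imp (imp y one) (neg z)) (imp x one) = imp (imp (imp x one) (neg z)) (imp y one)"
      using W2[of x y "neg z"] W7 by metis
    have b: "\<And>p q. imp (imp (imp q one) (neg z)) (imp p one) = imp (imp one p) (imp (imp one q) z)"
      using W1 W7 W8 by metis
    show "?thesis x y z" using a b by metis
  qed
  have JN: "\<And>x y. qMV_join (\<lambda>x y. imp (neg x) y) neg pl mi x y = qW_join imp neg pl mi x y"
    unfolding qMV_join_def qW_join_def using W1 W7 W8 NPL NMI by metis
  have U1: "imp u u = imp one one" by (rule E)
  have NN: "\<And>A. imp A (imp u u) = imp (imp u u) (neg A)" using W1 N0 by metis
  have PLu: "\<And>x. imp (imp u u) (pl x) = pl x" using SP U1 by metis
  have MIu: "\<And>x. imp (imp u u) (mi x) = mi x" using SM U1 by metis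
  have PLU: "\<And>x. pl (imp (imp u u) x) = pl x" using W5 U1 SP by metis
  have MIU: "\<And>x. mi (imp (imp u u) x) = mi x" using W5m U1 SM by metis
  have G2: "\<And>x y z. imp (neg (imp (neg one) x)) (imp (neg y) (imp (neg one) z)) =
        imp (neg (imp (neg (imp (neg one) x)) y)) (imp (neg one) z)"
  proof -
    fix x y z
    have l: "imp (neg (imp (neg one) x)) (imp (neg y) (imp (neg one) z)) = imp (imp one (neg x)) (imp (imp one (neg z)) y)"
      using W1 W7 W8 by metis
    have r: "imp (neg (imp (neg (imp (neg one) x)) y)) (imp (neg one) z) = imp (imp one (neg z)) (imp (imp one (neg x)) y)"
      using W1 W7 W8 by metis
    show "?thesis x y z" using l r EX by metis
  qed
  show ?thesis
    unfolding strong_quasi_MV_star_def quasi_MV_star_def JN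
    apply (intro conjI allI)
    subgoal using W1 W8 by metis
    subgoal by (rule G2)
    subgoal using W7 W3 W8 by metis
    subgoal using NN W7 W8 W4 by metis
    subgoal using NN W8 PLu PLU W1 N0 by metis
    subgoal using PLU PL W1 W7 W8 N0 by metis
    subgoal using NN W8 MIu MIU W1 N0 by metis
    subgoal using MIU MI W1 W7 W8 N0 by metis
    subgoal using W6 NPL NMI W8 W7 by metis
    subgoal by (rule N0[symmetric])
    subgoal using E by metis
    subgoal using W7 W1 W8 by metis
    subgoal by (rule W8)
    subgoal using W9 W8 by metis
    subgoal using W10 by metis
    subgoal using W11 by metis
    subgoal using W12 by metis
    subgoal using NN PLu W8 by metis
    subgoal using NN MIu W8 by metis
    done
qed
end
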